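(* For $i\in\{1,\dots,d\}$, $r\in\mathbb{N}$ and $\boldsymbol{x}\in\mathcal{S}$, let $$R_{i,r}(\boldsymbol{x}) := r^{1/2}\sum_{\boldsymbol{k},\boldsymbol{\ell}\in\mathbb{N}_0^d\cap r\mathcal{S}}\big((k_i\wedge\ell_i)/r-x_i\big)P_{\boldsymbol{k},r}(\boldsymbol{x})P_{\boldsymbol{\ell},r}(\boldsymbol{x}).$$ Then $\sup_{1\le i\le d}\sup_{r\in\mathbb{N}}\sup_{\boldsymbol{x}\in\mathcal{S}}|R_{i,r}(\boldsymbol{x})|\le1$, and for every $\boldsymbol{x}\in\mathrm{Int}(\mathcal{S})$ and every $i$, $$R_{i,r}(\boldsymbol{x}) = -\sqrt{\frac{x_i(1-x_i)}{\pi}}+\mathrm{o}_{\boldsymbol{x}}(1),\quad\text{as } r\to\infty.$$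
   Context: Let $d\ge1$, $\|\boldsymbol{x}\|_1=\sum_i|x_i|$, $\mathcal{S}:=\{\boldsymbol{x}\in[0,1]^d:\|\boldsymbol{x}\|_1\le1\}$, $\mathrm{Int}(\mathcal{S}):=\{\boldsymbol{x}\in(0,1)^d:\|\boldsymbol{x}\|_1<1\}$. For $r\in\mathbb{N}$, $\mathbb{N}_0^d\cap r\mathcal{S}$ is the set of $\boldsymbol{k}\in\mathbb{N}_0^d$ with $\|\boldsymbol{k}\|_1\le r$, and $P_{\boldsymbol{k},r}(\boldsymbol{x}) := \frac{r!}{(r-\|\boldsymbol{k}\|_1)!\prod_i k_i!}(1-\|\boldsymbol{x}\|_1)^{r-\|\boldsymbol{k}\|_1}\prod_i x_i^{k_i}$. $a\wedge b=\min(a,b)$. $\mathrm{o}_{\boldsymbol{x}}(1)$ denotes a term tending to $0$ at a rate that may depend on $\boldsymbol{x}$. *)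

theory Defs
  imports "HOL-Analysis.Analysis"
begin

text \<open>Points of R^d are functions nat => real, only the coordinates 0..<d matter
  (coordinate i of the paper is index i-1 here). Multi-indices are functions nat => nat
  vanishing outside {..<d}.\<close>

definition l1norm :: "nat \<Rightarrow> (nat \<Rightarrow> real) \<Rightarrow> real" where
  "l1norm d x = (\<Sum>i<d. \<bar>x i\<bar>)"

definition stdSimplex :: "nat \<Rightarrow> (nat \<Rightarrow> real) set" where
  "stdSimplex d = {x. (\<forall>i<d. 0 \<le> x i \<and> x i \<le> 1) \<and> (\<forall>i\<ge>d. x i = 0) \<and> l1norm d x \<le> 1}"

definition simplexInt :: "nat \<Rightarrow> (nat \<Rightarrow> real) set" where
  "simplexInt d = {x. (\<forall>i<d. 0 < x i \<and> x i < 1) \<and> (\<forall>i\<ge>d. x i = 0) \<and> l1norm d x < 1}"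

definition lattice_pts :: "nat \<Rightarrow> nat \<Rightarrow> (nat \<Rightarrow> nat) set" where
  "lattice_pts d r = {k. (\<forall>i\<ge>d. k i = 0) \<and> (\<Sum>i<d. k i) \<le> r}"

definition multinom :: "nat \<Rightarrow> nat \<Rightarrow> (nat \<Rightarrow> nat) \<Rightarrow> (nat \<Rightarrow> real) \<Rightarrow> real" where
  "multinom d r k x =
     fact r / (fact (r - (\<Sum>i<d. k i)) * (\<Prod>i<d. fact (k i)))
     * (1 - l1norm d x) ^ (r - (\<Sum>i<d. k i)) * (\<Prod>i<d. x i ^ k i)"

definition Rfun :: "nat \<Rightarrow> nat \<Rightarrow> nat \<Rightarrow> (nat \<Rightarrow> real) \<Rightarrow> real" where
  "Rfun d i r x = sqrt (real r) *
     (\<Sum>k\<in>lattice_pts d r. \<Sum>l\<in>lattice_pts d r.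
        (real (min (k i) (l i)) / real r - x i) * multinom d r k x * multinom d r l x)"

end

theory Submission
  imports Defs "HOL-Probability.Probability_Mass_Function"
begin

lemma exp_bind_fin:
  fixes f :: "'b \<Rightarrow> real"
  assumes M: "finite (set_pmf M)" and N: "\<And>x. x \<in> set_pmf M \<Longrightarrow> finite (set_pmf (N x))"
  shows "measure_pmf.expectation (bind_pmf M N) f =
         measure_pmf.expectation M (\<lambda>x. measure_pmf.expectation (N x) f)"
proof -
  define A where "A = (\<Union>x\<in>set_pmf M. set_pmf (N x))"
  have fA: "finite A" using M N unfolding A_def by auto
  have "measure_pmf.expectation (bind_pmf M N) f = (\<Sum>y\<in>A. f y * pmf (bind_pmf M N) y)"
    by (rule integral_measure_pmf_real) (use fA in \<open>auto simp: A_def\<close>)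
  also have "\<dots> = (\<Sum>y\<in>A. f y * (\<Sum>x\<in>set_pmf M. pmf (N x) y * pmf M x))"
    by (intro sum.cong refl arg_cong2[where f="(*)"] , subst pmf_bind,
        rule integral_measure_pmf_real) (use M in auto)
  also have "\<dots> = (\<Sum>x\<in>set_pmf M. (\<Sum>y\<in>A. f y * pmf (N x) y) * pmf M x)"
    by (simp add: sum_distrib_left sum_distrib_right sum.swap[of _ A] mult_ac)
  also have "\<dots> = (\<Sum>x\<in>set_pmf M. measure_pmf.expectation (N x) f * pmf M x)"
    by (intro sum.cong refl arg_cong2[where f="(*)"] integral_measure_pmf_real[symmetric])
       (use fA in \<open>auto simp: A_def\<close>)
  also have "\<dots> = measure_pmf.expectation M (\<lambda>x. measure_pmf.expectation (N x) f)"
    by (rule integral_measure_pmf_real[symmetric]) (use M in auto)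
  finally show ?thesis .
qed

definition stp :: "real \<Rightarrow> int pmf" where
  "stp p = bind_pmf (bernoulli_pmf p) (\<lambda>a. bind_pmf (bernoulli_pmf p) (\<lambda>b. return_pmf (of_bool a - of_bool b)))"

primrec walk :: "real \<Rightarrow> nat \<Rightarrow> int pmf" where
  "walk p 0 = return_pmf 0"
| "walk p (Suc r) = bind_pmf (walk p r) (\<lambda>x. bind_pmf (stp p) (\<lambda>s. return_pmf (x + s)))"

lemma int_if01[simp]: "int (if a then 1 else 0) = (if a then 1 else 0)" by simp

definition Dp :: "real \<Rightarrow> nat \<Rightarrow> int pmf" where
  "Dp p r = bind_pmf (binomial_pmf r p) (\<lambda>k. bind_pmf (binomial_pmf r p) (\<lambda>l. return_pmf (int k - int l)))"

lemma Dp_walk: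
  assumes p: "p \<in> {0..1}"
  shows "Dp p r = walk p r"
proof (induction r)
  case 0
  then show ?case using p by (simp add: Dp_def binomial_pmf_0 bind_return_pmf)
next
  case (Suc r)
  define B where "B = binomial_pmf r p"
  define E where "E = bernoulli_pmf p"
  have "Dp p (Suc r) = bind_pmf E (\<lambda>a. bind_pmf B (\<lambda>k. bind_pmf E (\<lambda>b. bind_pmf B (\<lambda>l.
          return_pmf (int ((if a then 1 else 0) + k) - int ((if b then 1 else 0) + l))))))"
    unfolding Dp_def binomial_pmf_Suc[OF p] B_def E_def
    by (simp add: bind_assoc_pmf bind_return_pmf)
  also have "\<dots> = bind_pmf B (\<lambda>k. bind_pmf E (\<lambda>a. bind_pmf E (\<lambda>b. bind_pmf B (\<lambda>l.
          return_pmf (int ((if a then 1 else 0) + k) - int ((if b then 1 else 0) + l))))))"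
    by (rule bind_commute_pmf)
  also have "\<dots> = bind_pmf B (\<lambda>k. bind_pmf E (\<lambda>a. bind_pmf B (\<lambda>l. bind_pmf E (\<lambda>b.
          return_pmf (int ((if a then 1 else 0) + k) - int ((if b then 1 else 0) + l))))))"
    by (intro bind_pmf_cong refl bind_commute_pmf)
  also have "\<dots> = bind_pmf B (\<lambda>k. bind_pmf B (\<lambda>l. bind_pmf E (\<lambda>a. bind_pmf E (\<lambda>b.
          return_pmf (int ((if a then 1 else 0) + k) - int ((if b then 1 else 0) + l))))))"
    by (intro bind_pmf_cong refl bind_commute_pmf)
  also have "\<dots> = walk p (Suc r)"
    unfolding walk.simps Suc[symmetric] Dp_def stp_def B_def[symmetric] E_def[symmetric]
    by (simp add: bind_assoc_pmf bind_return_pmf algebra_simps of_bool_def)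
  finally show ?case .
qed

lemma pmf_stp:
  assumes p: "p \<in> {0..1}"
  shows "pmf (stp p) z = (if z = 1 \<or> z = -1 then p*(1-p) else if z = 0 then p^2+(1-p)^2 else 0)"
  using p unfolding stp_def
  by (simp add: pmf_bind indicator_def power2_eq_square)

lemma gam01:
  assumes p: "p \<in> {(0::real)..1}"
  shows "0 \<le> 4*p*(1-p) \<and> 4*p*(1-p) \<le> 1"
proof -
  have "4*p*(1-p) = 1 - (2*p-1)^2" by (simp add: power2_eq_square algebra_simps)
  moreover have "(2*p-1)^2 \<ge> 0" by simp
  moreover have "(2*p-1)^2 \<le> 1" using p by (subst abs_square_le_1) auto
  ultimately show ?thesis using p by auto
qed

lemma stp_mix:
  assumes p: "p \<in> {0..1}"
  shows "stp p = bind_pmf (bernoulli_pmf (4*p*(1-p))) (\<lambda>c. if c then stp (1/2) else return_pmf 0)"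
proof (rule pmf_eqI)
  fix z :: int
  have g: "0 \<le> 4*p*(1-p)" "4*p*(1-p) \<le> 1" using p
    using gam01[OF p] by auto
  show "pmf (stp p) z = pmf (bind_pmf (bernoulli_pmf (4*p*(1-p))) (\<lambda>c. if c then stp (1/2) else return_pmf 0)) z"
    using p g
    by (simp add: pmf_bind pmf_stp indicator_def power2_eq_square) (auto simp: algebra_simps)
qed

lemma walk_mix:
  assumes p: "p \<in> {0..1}"
  shows "walk p r = bind_pmf (binomial_pmf r (4*p*(1-p))) (walk (1/2))"
proof (induction r)
  case 0
  have g: "4*p*(1-p) \<in> {0..1}" using p
    using gam01[OF p] by auto
  then show ?case by (simp add: binomial_pmf_0 bind_return_pmf)
next
  case (Suc r)
  define g where "g = 4*p*(1-p)"
  have g01: "g \<in> {0..1}" using gam01[OF p] unfolding g_def by auto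
  define B where "B = binomial_pmf r g"
  define E where "E = bernoulli_pmf g"
  define W where "W = walk (1/2)"
  have "walk p (Suc r) = bind_pmf B (\<lambda>n. bind_pmf (W n) (\<lambda>x. bind_pmf E (\<lambda>c.
          bind_pmf (if c then stp (1/2) else return_pmf 0) (\<lambda>s. return_pmf (x+s)))))"
    unfolding walk.simps Suc stp_mix[OF p] B_def E_def W_def g_def by (simp add: bind_assoc_pmf)
  also have "\<dots> = bind_pmf B (\<lambda>n. bind_pmf E (\<lambda>c. bind_pmf (W n) (\<lambda>x.
          bind_pmf (if c then stp (1/2) else return_pmf 0) (\<lambda>s. return_pmf (x+s)))))"
    by (intro bind_pmf_cong refl bind_commute_pmf)
  also have "\<dots> = bind_pmf B (\<lambda>n. bind_pmf E (\<lambda>c. W ((if c then 1 else 0) + n)))"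
  proof (intro bind_pmf_cong refl)
    fix n c
    show "bind_pmf (W n) (\<lambda>x. bind_pmf (if c then stp (1/2) else return_pmf 0) (\<lambda>s. return_pmf (x+s)))
          = W ((if c then 1 else 0) + n)"
      by (cases c) (simp_all add: W_def bind_return_pmf bind_return_pmf')
  qed
  also have "\<dots> = bind_pmf E (\<lambda>c. bind_pmf B (\<lambda>n. W ((if c then 1 else 0) + n)))"
    by (rule bind_commute_pmf)
  also have "\<dots> = bind_pmf (binomial_pmf (Suc r) g) W"
    unfolding binomial_pmf_Suc[OF g01] B_def E_def by (simp add: bind_assoc_pmf bind_return_pmf)
  finally show ?case unfolding g_def W_def .
qed

lemma fin_stp: "p \<in> {0..1} \<Longrightarrow> finite (set_pmf (stp p))"
  by (rule finite_subset[of _ "{-1,0,1}"]) (auto simp: set_pmf_iff pmf_stp split: if_splits)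

lemma fin_walk: "p \<in> {0..1} \<Longrightarrow> finite (set_pmf (walk p r))"
  by (induction r) (auto simp: set_bind_pmf fin_stp)

lemma exp_stp:
  fixes f :: "int \<Rightarrow> real"
  assumes p: "p \<in> {0..1}"
  shows "measure_pmf.expectation (stp p) f = (p^2+(1-p)^2) * f 0 + p*(1-p)*(f 1 + f (-1))"
  using p by (subst integral_measure_pmf_real[of "{-1,0,1}"])
    (auto simp: set_pmf_iff pmf_stp algebra_simps split: if_splits)

lemma exp_walk_Suc:
  fixes f :: "int \<Rightarrow> real"
  assumes p: "p \<in> {0..1}"
  shows "measure_pmf.expectation (walk p (Suc r)) f =
     measure_pmf.expectation (walk p r) (\<lambda>x. measure_pmf.expectation (stp p) (\<lambda>s. f (x + s)))"
  unfolding walk.simps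
  by (subst exp_bind_fin) (auto simp: fin_walk[OF p] fin_stp[OF p] exp_bind_fin)

lemma abs_step:
  assumes p: "p \<in> {0..1}"
  shows "measure_pmf.expectation (stp p) (\<lambda>s. \<bar>real_of_int (x + s)\<bar>) =
         \<bar>real_of_int x\<bar> + (if x = 0 then 2*p*(1-p) else 0)"
proof -
  consider "x = 0" | "x \<ge> 1" | "x \<le> -1" by linarith
  then show ?thesis
  proof cases
    case 1 then show ?thesis by (simp add: exp_stp[OF p] power2_eq_square algebra_simps)
  next
    case 2
    then have "\<bar>real_of_int (x + 1)\<bar> = x + 1" "\<bar>real_of_int (x + -1)\<bar> = x - 1" "\<bar>real_of_int x\<bar> = x" by auto
    then show ?thesis using 2 unfolding exp_stp[OF p] by (simp add: power2_eq_square algebra_simps)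
  next
    case 3
    then have "\<bar>real_of_int (x + 1)\<bar> = -x - 1" "\<bar>real_of_int (x + -1)\<bar> = 1 - x" "\<bar>real_of_int x\<bar> = -x" by auto
    then show ?thesis using 3 unfolding exp_stp[OF p] by (simp add: power2_eq_square algebra_simps)
  qed
qed

lemma sq_step:
  assumes p: "p \<in> {0..1}"
  shows "measure_pmf.expectation (stp p) (\<lambda>s. (real_of_int (x + s))^2) =
         (real_of_int x)^2 + 2*p*(1-p)"
proof -
  have "(p^2+(1-p)^2) + 2*p*(1-p) = 1" by (simp add: power2_eq_square algebra_simps)
  then show ?thesis using p unfolding exp_stp[OF p]
    by (auto simp: algebra_simps power2_eq_square)
qed

lemma exp_walk_abs:
  assumes p: "p \<in> {0..1}"
  shows "measure_pmf.expectation (walk p (Suc r)) (\<lambda>x. \<bar>real_of_int x\<bar>) =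
         measure_pmf.expectation (walk p r) (\<lambda>x. \<bar>real_of_int x\<bar>) + 2*p*(1-p) * pmf (walk p r) 0"
proof -
  have "measure_pmf.expectation (walk p (Suc r)) (\<lambda>x. \<bar>real_of_int x\<bar>) =
     measure_pmf.expectation (walk p r) (\<lambda>x. \<bar>real_of_int x\<bar> + (if x = 0 then 2*p*(1-p) else 0))"
    unfolding exp_walk_Suc[OF p] abs_step[OF p] ..
  also have "\<dots> = measure_pmf.expectation (walk p r) (\<lambda>x. \<bar>real_of_int x\<bar>) +
       measure_pmf.expectation (walk p r) (\<lambda>x. (if x = 0 then 2*p*(1-p) else 0))"
    by (rule Bochner_Integration.integral_add) (auto intro: integrable_measure_pmf_finite fin_walk[OF p])
  also have "measure_pmf.expectation (walk p r) (\<lambda>x. (if x = 0 then 2*p*(1-p) else 0)) = 2*p*(1-p) * pmf (walk p r) 0"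
    by (subst integral_measure_pmf_real[of "{0}"]) (auto split: if_splits)
  finally show ?thesis .
qed

lemma exp_walk_sq:
  assumes p: "p \<in> {0..1}"
  shows "measure_pmf.expectation (walk p r) (\<lambda>x. (real_of_int x)^2) = 2*p*(1-p) * r"
proof (induction r)
  case 0
  then show ?case by simp
next
  case (Suc r)
  have "measure_pmf.expectation (walk p (Suc r)) (\<lambda>x. (real_of_int x)^2) =
     measure_pmf.expectation (walk p r) (\<lambda>x. (real_of_int x)^2 + 2*p*(1-p))"
    unfolding exp_walk_Suc[OF p] sq_step[OF p] ..
  also have "\<dots> = measure_pmf.expectation (walk p r) (\<lambda>x. (real_of_int x)^2) + 2*p*(1-p)"
    by (subst Bochner_Integration.integral_add) (auto intro: integrable_measure_pmf_finite fin_walk[OF p])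
  finally show ?case using Suc by (simp add: algebra_simps)
qed

definition cb :: "nat \<Rightarrow> real" where "cb n = real ((2*n) choose n) / 4^n"

lemma cb_Suc: "cb (Suc n) = cb n * (2*n+1) / (2*(n+1))"
proof -
  have a: "real ((2*n) choose n) = (fact (2*n) :: real) / (fact n * fact n)"
    by (subst binomial_fact) auto
  have b: "real ((2*Suc n) choose Suc n) = (fact (2*n) :: real) * ((2*n+1)*(2*n+2)) / (fact n * fact n * ((n+1)*(n+1)))"
    by (subst binomial_fact) (auto simp: fact_Suc algebra_simps)
  have b2: "real ((2*Suc n) choose Suc n) / 4^Suc n = (real ((2*n) choose n) / 4^n) *
      ((real (2*n+1) * real (2*n+2)) / (real (n+1) * real (n+1) * 4))"
    unfolding a b by (simp only: divide_inverse inverse_mult_distrib mult_ac power_Suc of_nat_mult of_nat_fact)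
  have c: "(real (2*n+1) * real (2*n+2)) / (real (n+1) * real (n+1) * 4) = (2*n+1) / (2*(n+1))"
  proof -
    have "(real (2*n+1) * real (2*n+2)) / (real (n+1) * real (n+1) * 4) =
          ((2*real n+1) * (2*(real n+1))) / ((2*(real n+1)) * (2*(real n+1)))"
      by (simp add: algebra_simps)
    also have "\<dots> = (2*real n+1) / (2*(real n+1))"
      by (rule nonzero_mult_divide_mult_cancel_right) simp
    finally show ?thesis by (simp add: add.commute)
  qed
  show ?thesis unfolding cb_def b2 c by simp
qed

lemma cb_rec: "real (Suc n) * cb (Suc n) = real n * cb n + cb n / 2"
  unfolding cb_Suc by (simp add: field_simps)

lemma pmf_Dp0:
  assumes p: "p \<in> {0..1}"
  shows "pmf (Dp p n) 0 = (\<Sum>k\<le>n. (real (n choose k) * p ^ k * (1 - p) ^ (n - k))^2)"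
proof -
  have "pmf (Dp p n) 0 = (\<Sum>k\<le>n. (real (n choose k) * p ^ k * (1 - p) ^ (n - k)) *
          (real (n choose k) * p ^ k * (1 - p) ^ (n - k)))"
    unfolding Dp_def pmf_bind using p
    by (simp add: expectation_binomial_pmf' indicator_def)
  then show ?thesis by (simp add: power2_eq_square)
qed

lemma two_pow_four: "(2::real)^(n*2) = 4^n" by (induction n) auto

lemma pmf_half0: "pmf (walk (1/2) n) 0 = cb n"
proof -
  have "pmf (walk (1/2) n) 0 = pmf (Dp (1/2) n) 0" by (simp add: Dp_walk)
  also have "\<dots> = (\<Sum>k\<le>n. (real (n choose k))^2 / 4^n)"
    by (subst pmf_Dp0) (auto intro!: sum.cong simp: power_mult_distrib power_divide power_add[symmetric]
         power_mult[symmetric] field_simps two_pow_four)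
  also have "\<dots> = cb n"
    unfolding cb_def sum_divide_distrib[symmetric] of_nat_power[symmetric] of_nat_sum[symmetric] choose_square_sum ..
  finally show ?thesis .
qed

lemma exp_half_abs: "measure_pmf.expectation (walk (1/2) n) (\<lambda>x. \<bar>real_of_int x\<bar>) = real n * cb n"
proof (induction n)
  case 0 then show ?case by simp
next
  case (Suc n)
  then show ?case by (subst exp_walk_abs) (auto simp: pmf_half0 cb_Suc field_simps)
qed

definition w :: "nat \<Rightarrow> real \<Rightarrow> nat \<Rightarrow> real" where
  "w r p a = real (r choose a) * p ^ a * (1 - p) ^ (r - a)"

lemma exp_bin: "p \<in> {0..1} \<Longrightarrow> measure_pmf.expectation (binomial_pmf r p) f = (\<Sum>a\<le>r. w r p a * f a)"
  by (simp add: expectation_binomial_pmf' w_def)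

lemma exp_bin_Suc:
  fixes f :: "nat \<Rightarrow> real"
  assumes p: "p \<in> {0..1}"
  shows "measure_pmf.expectation (binomial_pmf (Suc n) p) f =
     p * measure_pmf.expectation (binomial_pmf n p) (\<lambda>k. f (Suc k)) + (1-p) * measure_pmf.expectation (binomial_pmf n p) f"
  unfolding binomial_pmf_Suc[OF p] using p
  by (subst exp_bind_fin) (auto simp: exp_bind_fin finite_set_pmf_binomial_pmf)

lemma bin_one: "p \<in> {0..1} \<Longrightarrow> (\<Sum>a\<le>r. w r p a) = 1"
  using exp_bin[of p r "\<lambda>_. 1"] by simp

lemma bin_mean_exp: "p \<in> {0..1} \<Longrightarrow> measure_pmf.expectation (binomial_pmf r p) real = r * p"
proof (induction r)
  case 0 then show ?case by (simp add: binomial_pmf_0)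
next
  case (Suc r)
  have "measure_pmf.expectation (binomial_pmf r p) (\<lambda>k. real (Suc k)) =
        measure_pmf.expectation (binomial_pmf r p) real + 1"
    using Suc.prems by (simp add: Bochner_Integration.integral_add)
  then show ?case using Suc by (simp add: exp_bin_Suc algebra_simps)
qed

lemma bin_sq_exp: "p \<in> {0..1} \<Longrightarrow> measure_pmf.expectation (binomial_pmf r p) (\<lambda>k. (real k)^2) = r*p*(1-p) + (r*p)^2"
proof (induction r)
  case 0 then show ?case by (simp add: binomial_pmf_0)
next
  case (Suc r)
  have "measure_pmf.expectation (binomial_pmf r p) (\<lambda>k. (real (Suc k))^2) =
        measure_pmf.expectation (binomial_pmf r p) (\<lambda>k. (real k)^2) + 2 * measure_pmf.expectation (binomial_pmf r p) real + 1"
    using Suc.prems by (simp add: Bochner_Integration.integral_add power2_eq_square algebra_simps)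
  then show ?case using Suc by (simp add: exp_bin_Suc bin_mean_exp power2_eq_square algebra_simps)
qed

lemma bin_mean: "p \<in> {0..1} \<Longrightarrow> (\<Sum>a\<le>r. w r p a * real a) = r * p"
  using bin_mean_exp[of p r] exp_bin[of p r real] by simp

lemma bin_sq: "p \<in> {0..1} \<Longrightarrow> (\<Sum>a\<le>r. w r p a * (real a)^2) = r*p*(1-p) + (r*p)^2"
  using bin_sq_exp[of p r] exp_bin[of p r "\<lambda>k. (real k)^2"] by simp

lemma w_nonneg: "p \<in> {0..1} \<Longrightarrow> w r p a \<ge> 0"
  by (auto simp: w_def)

lemma exp_Dp:
  fixes f :: "int \<Rightarrow> real"
  assumes p: "p \<in> {0..1}"
  shows "measure_pmf.expectation (Dp p r) f = (\<Sum>a\<le>r. w r p a * (\<Sum>b\<le>r. w r p b * f (int a - int b)))"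
proof -
  have "measure_pmf.expectation (Dp p r) f = (\<Sum>a\<le>r. w r p a * (\<Sum>b\<le>r. w r p b * f (int b - int a)))"
    unfolding Dp_def using p
    by (subst exp_bind_fin) (auto simp: exp_bind_fin finite_set_pmf_binomial_pmf exp_bin)
  also have "\<dots> = (\<Sum>a\<le>r. \<Sum>b\<le>r. w r p a * w r p b * f (int b - int a))"
    by (simp add: sum_distrib_left mult_ac)
  also have "\<dots> = (\<Sum>b\<le>r. \<Sum>a\<le>r. w r p a * w r p b * f (int b - int a))"
    by (rule sum.swap)
  also have "\<dots> = (\<Sum>a\<le>r. w r p a * (\<Sum>b\<le>r. w r p b * f (int a - int b)))"
    by (simp add: sum_distrib_left mult_ac)
  finally show ?thesis .
qed

definition mt :: "nat \<Rightarrow> nat \<Rightarrow> (nat \<Rightarrow> nat) \<Rightarrow> (nat \<Rightarrow> real) \<Rightarrow> real \<Rightarrow> real" where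
  "mt d r k y z = fact r / (fact (r - (\<Sum>i<d. k i)) * (\<Prod>i<d. fact (k i)))
     * z ^ (r - (\<Sum>i<d. k i)) * (\<Prod>i<d. y i ^ k i)"

lemma finite_lattice: "finite (lattice_pts d r)"
proof -
  have "lattice_pts d r \<subseteq> (\<lambda>f i. if i < d then f i else 0) ` (PiE {..<d} (\<lambda>_. {..r}))"
  proof
    fix k assume k: "k \<in> lattice_pts d r"
    then have "k i \<le> r" if "i < d" for i
      using member_le_sum[of i "{..<d}" k] that by (auto simp: lattice_pts_def)
    then have "restrict k {..<d} \<in> PiE {..<d} (\<lambda>_. {..r})" by auto
    moreover have "k = (\<lambda>i. if i < d then restrict k {..<d} i else 0)"
      using k by (auto simp: lattice_pts_def fun_eq_iff)
    ultimately show "k \<in> (\<lambda>f i. if i < d then f i else 0) ` (PiE {..<d} (\<lambda>_. {..r}))" by blast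
  qed
  then show ?thesis by (rule finite_subset) (auto intro: finite_PiE)
qed

lemma lattice_Suc_bij:
  "bij_betw (\<lambda>(m,k'). k'(d := m)) (SIGMA m:{..r}. lattice_pts d (r-m)) (lattice_pts (Suc d) r)"
proof (rule bij_betwI[where g="\<lambda>k. (k d, k(d := 0))"])
  show "(\<lambda>(m,k'). k'(d := m)) \<in> (SIGMA m:{..r}. lattice_pts d (r-m)) \<rightarrow> lattice_pts (Suc d) r"
  proof
    fix x assume "x \<in> (SIGMA m:{..r}. lattice_pts d (r-m))"
    then obtain m k' where x: "x = (m,k')" "m \<le> r" "k' \<in> lattice_pts d (r-m)" by auto
    have "(\<Sum>i<Suc d. (k'(d:=m)) i) = (\<Sum>i<d. k' i) + m" by simp
    then show "(\<lambda>(m,k'). k'(d := m)) x \<in> lattice_pts (Suc d) r"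
      using x by (auto simp: lattice_pts_def)
  qed
  show "(\<lambda>k. (k d, k(d := 0))) \<in> lattice_pts (Suc d) r \<rightarrow> (SIGMA m:{..r}. lattice_pts d (r-m))"
  proof
    fix k assume k: "k \<in> lattice_pts (Suc d) r"
    have s: "(\<Sum>i<Suc d. k i) = (\<Sum>i<d. k i) + k d" by simp
    have "(\<Sum>i<d. (k(d:=0)) i) = (\<Sum>i<d. k i)" by (intro sum.cong) auto
    then show "(\<lambda>k. (k d, k(d := 0))) k \<in> (SIGMA m:{..r}. lattice_pts d (r-m))"
      using k s by (auto simp: lattice_pts_def)
  qed
qed (auto simp: lattice_pts_def)

lemma mt_Suc:
  assumes m: "m \<le> r" and k': "k' \<in> lattice_pts d (r-m)"
  shows "mt (Suc d) r (k'(d:=m)) y z = real (r choose m) * y d ^ m * mt d (r-m) k' y z"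
proof -
  have s1: "(\<Sum>i<d. (k'(d:=m)) i) = (\<Sum>i<d. k' i)" by (intro sum.cong) auto
  have p1: "(\<Prod>i<d. fact ((k'(d:=m)) i)) = (\<Prod>i<d. fact (k' i) :: real)" by (intro prod.cong) auto
  have p2: "(\<Prod>i<d. y i ^ (k'(d:=m)) i) = (\<Prod>i<d. y i ^ k' i)" by (intro prod.cong) auto
  define s where "s = (\<Sum>i<d. k' i)"
  have sle: "s \<le> r - m" using k' by (auto simp: lattice_pts_def s_def)
  have e: "r - (s + m) = r - m - s" by simp
  have "real (r choose m) = fact r / (fact m * fact (r - m))" by (rule binomial_fact[OF m])
  then show ?thesis unfolding mt_def using s1 p1 p2 sle
    by (simp add: s_def[symmetric] e field_simps)
qed

theorem multinomial_thm:
  "(\<Sum>k\<in>lattice_pts d r. mt d r k y z) = (z + (\<Sum>i<d. y i))^r"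
proof (induction d arbitrary: r)
  case 0
  have "lattice_pts 0 r = {\<lambda>_. 0}" by (auto simp: lattice_pts_def)
  then show ?case by (simp add: mt_def)
next
  case (Suc d)
  have "(\<Sum>k\<in>lattice_pts (Suc d) r. mt (Suc d) r k y z) =
        (\<Sum>(m,k')\<in>(SIGMA m:{..r}. lattice_pts d (r-m)). mt (Suc d) r (k'(d:=m)) y z)"
    using sum.reindex_bij_betw[OF lattice_Suc_bij[of d r], of "\<lambda>k. mt (Suc d) r k y z", symmetric]
    by (simp add: case_prod_unfold)
  also have "\<dots> = (\<Sum>m\<le>r. \<Sum>k'\<in>lattice_pts d (r-m). mt (Suc d) r (k'(d:=m)) y z)"
    by (subst sum.Sigma) (auto simp: finite_lattice)
  also have "\<dots> = (\<Sum>m\<le>r. real (r choose m) * y d ^ m * (\<Sum>k'\<in>lattice_pts d (r-m). mt d (r-m) k' y z))"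
    by (intro sum.cong refl) (simp add: mt_Suc sum_distrib_left)
  also have "\<dots> = (\<Sum>m\<le>r. real (r choose m) * y d ^ m * (z + (\<Sum>i<d. y i))^(r-m))"
    by (simp add: Suc.IH)
  also have "\<dots> = (y d + (z + (\<Sum>i<d. y i)))^r"
    by (rule binomial_ring[symmetric])
  finally show ?case by (simp add: algebra_simps)
qed

lemma lattice_le: "k \<in> lattice_pts d r \<Longrightarrow> i < d \<Longrightarrow> k i \<le> r"
  using member_le_sum[of i "{..<d}" k] by (auto simp: lattice_pts_def)

lemma sum_group_coord:
  assumes "i < d"
  shows "(\<Sum>k\<in>lattice_pts d r. h k) = (\<Sum>j\<le>r. \<Sum>k\<in>{k\<in>lattice_pts d r. k i = j}. h k)"
  by (rule sum.group[symmetric]) (use assms lattice_le in \<open>auto simp: finite_lattice\<close>)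

lemma marginal_coeff:
  assumes i: "i < d" and x: "\<forall>l<d. 0 \<le> x l" and j: "j \<le> r"
  shows "(\<Sum>k\<in>{k\<in>lattice_pts d r. k i = j}. multinom d r k x) = real (r choose j) * x i ^ j * (1 - x i)^(r-j)"
proof -
  define z where "z = 1 - l1norm d x"
  have l1: "l1norm d x = (\<Sum>l<d. x l)" unfolding l1norm_def using x by (intro sum.cong) auto
  define c where "c j = (\<Sum>k\<in>{k\<in>lattice_pts d r. k i = j}. mt d r k x z)" for j
  define e where "e j = real (r choose j) * x i ^ j * (1 - x i)^(r-j)" for j
  have "(\<Sum>j\<le>r. c j * t^j) = (\<Sum>j\<le>r. e j * t^j)" for t :: real
  proof -
    define y where "y = x(i := t * x i)"
    have py: "(\<Prod>l<d. y l ^ k l) = t ^ k i * (\<Prod>l<d. x l ^ k l)" for k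
    proof -
      have "(\<Prod>l<d. y l ^ k l) = (\<Prod>l<d. (if l = i then t ^ k i else 1) * x l ^ k l)"
        by (intro prod.cong) (auto simp: y_def power_mult_distrib)
      also have "\<dots> = t ^ k i * (\<Prod>l<d. x l ^ k l)"
        by (simp add: prod.distrib prod.delta i)
      finally show ?thesis .
    qed
    have sy: "(\<Sum>l<d. y l) = (\<Sum>l<d. x l) + (t - 1) * x i"
    proof -
      have "(\<Sum>l<d. y l) = (\<Sum>l<d. x l + (if l = i then (t - 1) * x i else 0))"
        by (intro sum.cong) (auto simp: y_def algebra_simps)
      also have "\<dots> = (\<Sum>l<d. x l) + (t - 1) * x i"
        by (simp add: sum.distrib sum.delta i)
      finally show ?thesis .
    qed
    have "(\<Sum>j\<le>r. c j * t^j) = (\<Sum>j\<le>r. \<Sum>k\<in>{k\<in>lattice_pts d r. k i = j}. t ^ k i * mt d r k x z)"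
      unfolding c_def by (simp add: sum_distrib_left mult.commute)
    also have "\<dots> = (\<Sum>k\<in>lattice_pts d r. t ^ k i * mt d r k x z)"
      by (rule sum_group_coord[OF i, symmetric])
    also have "\<dots> = (\<Sum>k\<in>lattice_pts d r. mt d r k y z)"
      by (intro sum.cong refl) (simp add: mt_def py)
    also have "\<dots> = (z + (\<Sum>l<d. y l))^r" by (rule multinomial_thm)
    also have "\<dots> = (t * x i + (1 - x i))^r" unfolding sy z_def l1 by (simp add: algebra_simps)
    also have "\<dots> = (\<Sum>j\<le>r. e j * t^j)"
      unfolding binomial_ring e_def by (intro sum.cong refl) (simp add: power_mult_distrib)
    finally show ?thesis .
  qed
  then have "c j = e j" using polyfun_eq_coeffs[of c r e] j by blast
  then show ?thesis unfolding c_def e_def z_def multinom_def mt_def .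
qed

lemma marginal:
  assumes i: "i < d" and x: "\<forall>l<d. 0 \<le> x l"
  shows "(\<Sum>k\<in>lattice_pts d r. g (k i) * multinom d r k x) =
         (\<Sum>j\<le>r. g j * (real (r choose j) * x i ^ j * (1 - x i)^(r-j)))"
proof -
  have "(\<Sum>k\<in>lattice_pts d r. g (k i) * multinom d r k x) =
        (\<Sum>j\<le>r. \<Sum>k\<in>{k\<in>lattice_pts d r. k i = j}. g (k i) * multinom d r k x)"
    by (rule sum_group_coord[OF i])
  also have "\<dots> = (\<Sum>j\<le>r. g j * (\<Sum>k\<in>{k\<in>lattice_pts d r. k i = j}. multinom d r k x))"
    by (simp add: sum_distrib_left)
  also have "\<dots> = (\<Sum>j\<le>r. g j * (real (r choose j) * x i ^ j * (1 - x i)^(r-j)))"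
    by (intro sum.cong refl) (simp add: marginal_coeff[OF i x])
  finally show ?thesis .
qed

lemma simplex_props:
  assumes "x \<in> stdSimplex d" "i < d"
  shows "x i \<in> {0..1}" "\<forall>l<d. 0 \<le> x l"
  using assms by (auto simp: stdSimplex_def)

lemma Rfun_sum:
  assumes i: "i < d" and x: "x \<in> stdSimplex d"
  shows "Rfun d i r x = sqrt (real r) *
    (\<Sum>a\<le>r. w r (x i) a * (\<Sum>b\<le>r. w r (x i) b * (real (min a b) / real r - x i)))"
proof -
  note xn = simplex_props(2)[OF x i]
  define F where "F a b = (real (min a b) / real r - x i)" for a b
  have "(\<Sum>k\<in>lattice_pts d r. \<Sum>l\<in>lattice_pts d r. F (k i) (l i) * multinom d r k x * multinom d r l x)
      = (\<Sum>k\<in>lattice_pts d r. multinom d r k x * (\<Sum>l\<in>lattice_pts d r. F (k i) (l i) * multinom d r l x))"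
    by (simp add: sum_distrib_left mult_ac)
  also have "\<dots> = (\<Sum>k\<in>lattice_pts d r. multinom d r k x * (\<Sum>b\<le>r. F (k i) b * w r (x i) b))"
    by (intro sum.cong refl) (simp add: marginal[OF i xn] w_def)
  also have "\<dots> = (\<Sum>k\<in>lattice_pts d r. (\<lambda>a. (\<Sum>b\<le>r. F a b * w r (x i) b)) (k i) * multinom d r k x)"
    by (simp add: mult_ac)
  also have "\<dots> = (\<Sum>a\<le>r. (\<Sum>b\<le>r. F a b * w r (x i) b) * w r (x i) a)"
    by (subst marginal[OF i xn]) (simp add: w_def)
  finally show ?thesis unfolding Rfun_def F_def by (simp add: mult_ac)
qed

lemma Rfun_eq:
  assumes i: "i < d" and x: "x \<in> stdSimplex d" and r: "r \<ge> 1"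
  shows "Rfun d i r x = - measure_pmf.expectation (walk (x i) r) (\<lambda>z. \<bar>real_of_int z\<bar>) / (2 * sqrt (real r))"
proof -
  define p where "p = x i"
  have p: "p \<in> {0..1}" using simplex_props(1)[OF x i] by (simp add: p_def)
  define E where "E = measure_pmf.expectation (walk p r) (\<lambda>z. \<bar>real_of_int z\<bar>)"
  have E: "E = (\<Sum>a\<le>r. w r p a * (\<Sum>b\<le>r. w r p b * \<bar>real a - real b\<bar>))"
    unfolding E_def Dp_walk[OF p, symmetric] exp_Dp[OF p] by simp
  have rpos: "real r > 0" using r by simp
  have inner: "(\<Sum>b\<le>r. w r p b * (real (min a b) / real r - p)) =
      (real a + r * p - (\<Sum>b\<le>r. w r p b * \<bar>real a - real b\<bar>)) / (2 * r) - p" for a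
  proof -
    have m: "real (min a b) = (real a + real b - \<bar>real a - real b\<bar>) / 2" for b by auto
    have "(\<Sum>b\<le>r. w r p b * (real (min a b) / real r - p)) =
       (\<Sum>b\<le>r. (real a * w r p b + w r p b * real b - w r p b * \<bar>real a - real b\<bar>) / (2 * r) - p * w r p b)"
      unfolding m by (intro sum.cong refl) (simp add: field_simps)
    also have "\<dots> = (real a * (\<Sum>b\<le>r. w r p b) + (\<Sum>b\<le>r. w r p b * real b) - (\<Sum>b\<le>r. w r p b * \<bar>real a - real b\<bar>)) / (2 * r)
        - p * (\<Sum>b\<le>r. w r p b)"
      by (simp add: sum_subtractf sum.distrib sum_divide_distrib[symmetric] sum_distrib_left)
    also have "\<dots> = (real a + r * p - (\<Sum>b\<le>r. w r p b * \<bar>real a - real b\<bar>)) / (2 * r) - p"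
      using bin_one[OF p] bin_mean[OF p] by simp
    finally show ?thesis .
  qed
  have "(\<Sum>a\<le>r. w r p a * (\<Sum>b\<le>r. w r p b * (real (min a b) / real r - p))) =
      (\<Sum>a\<le>r. (w r p a * real a + r * p * w r p a - w r p a * (\<Sum>b\<le>r. w r p b * \<bar>real a - real b\<bar>)) / (2 * r) - p * w r p a)"
    unfolding inner by (intro sum.cong refl) (simp add: field_simps)
  also have "\<dots> = ((\<Sum>a\<le>r. w r p a * real a) + r * p * (\<Sum>a\<le>r. w r p a) - E) / (2 * r) - p * (\<Sum>a\<le>r. w r p a)"
    unfolding E by (simp add: sum_subtractf sum.distrib sum_divide_distrib[symmetric] sum_distrib_left)
  also have "\<dots> = - E / (2 * r)"
    using bin_one[OF p] bin_mean[OF p] rpos by (simp add: field_simps)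
  finally have S: "(\<Sum>a\<le>r. w r p a * (\<Sum>b\<le>r. w r p b * (real (min a b) / real r - p))) = - E / (2 * r)" .
  have "Rfun d i r x = sqrt r * (- E / (2 * r))"
    unfolding Rfun_sum[OF i x] using S by (simp add: p_def)
  also have "\<dots> = - E / (2 * sqrt r)"
    using rpos by (simp add: field_simps real_sqrt_mult[symmetric] del: real_sqrt_mult)
  finally show ?thesis unfolding E_def p_def .
qed

lemma walk_abs_bound:
  assumes p: "p \<in> {0..1}" and r: "r \<ge> 1"
  shows "measure_pmf.expectation (walk p r) (\<lambda>z. \<bar>real_of_int z\<bar>) \<le> 3/4 * sqrt (real r)"
proof -
  define s where "s = sqrt (real r)"
  have s: "s > 0" using r by (simp add: s_def)
  have ss: "s * s = real r" using r by (simp add: s_def)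
  have pt: "\<bar>real_of_int z\<bar> \<le> ((real_of_int z)^2 / s + s) / 2" for z
  proof -
    have "0 \<le> (\<bar>real_of_int z\<bar> - s)^2" by simp
    then have "2 * s * \<bar>real_of_int z\<bar> \<le> (real_of_int z)^2 + s^2" by (simp add: power2_eq_square algebra_simps)
    then show ?thesis using s by (simp add: field_simps power2_eq_square)
  qed
  have int: "integrable (measure_pmf (walk p r)) f" for f :: "int \<Rightarrow> real"
    by (rule integrable_measure_pmf_finite[OF fin_walk[OF p]])
  have "measure_pmf.expectation (walk p r) (\<lambda>z. \<bar>real_of_int z\<bar>) \<le>
        measure_pmf.expectation (walk p r) (\<lambda>z. ((real_of_int z)^2 / s + s) / 2)"
    by (rule integral_mono[OF int int pt])
  also have "\<dots> = (measure_pmf.expectation (walk p r) (\<lambda>z. (real_of_int z)^2) / s + s) / 2"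
    using int by (simp add: Bochner_Integration.integral_add)
  also have "\<dots> = (2*p*(1-p)*r / s + s) / 2" by (simp add: exp_walk_sq[OF p])
  also have "\<dots> \<le> (r / (2 * s) + s) / 2"
  proof -
    have "2*p*(1-p) \<le> 1/2" using gam01[OF p] by (simp add: power2_eq_square algebra_simps)
    then have "2*p*(1-p)*r \<le> (1/2)*r" by (rule mult_right_mono) auto
    then have "2*p*(1-p)*r / s \<le> ((1/2)*r) / s" using s by (rule divide_right_mono[OF _ less_imp_le])
    then show ?thesis by simp
  qed
  also have "\<dots> = 3/4 * s" using s ss by (simp add: field_simps)
  finally show ?thesis unfolding s_def .
qed

lemma sqrt_diff_le:
  assumes a: "a \<ge> 0" and b: "b > 0"
  shows "\<bar>sqrt a - sqrt b\<bar> \<le> \<bar>a - b\<bar> / sqrt b"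
proof -
  have sb: "sqrt b > 0" using b by simp
  have e: "a - b = (sqrt a - sqrt b) * (sqrt a + sqrt b)"
    using a b by (simp add: algebra_simps real_sqrt_mult_self)
  have "\<bar>a - b\<bar> = \<bar>sqrt a - sqrt b\<bar> * (sqrt a + sqrt b)"
    unfolding e using a b by (simp add: abs_mult)
  also have "\<dots> \<ge> \<bar>sqrt a - sqrt b\<bar> * sqrt b"
    using a by (intro mult_left_mono) auto
  finally show ?thesis using sb by (simp add: field_simps)
qed

lemma amgm_abs:
  assumes s: "s > 0"
  shows "\<bar>y::real\<bar> \<le> (y^2 * s + 1 / s) / 2"
proof -
  have "0 \<le> (\<bar>y\<bar> * s - 1)^2" by simp
  then have "2 * s * \<bar>y\<bar> \<le> y^2 * s^2 + 1" by (simp add: power2_eq_square algebra_simps)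
  then show ?thesis using s by (simp add: field_simps power2_eq_square)
qed

lemma bin_dev_sq:
  assumes g: "g \<in> {0..1}" and r: "r \<ge> 1"
  shows "(\<Sum>n\<le>r. w r g n * (real n / r - g)^2) = g * (1 - g) / r"
proof -
  have rp: "real r > 0" using r by simp
  have "(\<Sum>n\<le>r. w r g n * (real n / r - g)^2) =
        (\<Sum>n\<le>r. w r g n * (real n)^2) / r^2 - 2 * g / r * (\<Sum>n\<le>r. w r g n * real n) + g^2 * (\<Sum>n\<le>r. w r g n)"
    using rp by (simp add: sum_subtractf sum.distrib sum_divide_distrib[symmetric] sum_distrib_left
        power2_eq_square field_simps)
  also have "\<dots> = g * (1 - g) / r"
    unfolding bin_one[OF g] bin_mean[OF g] bin_sq[OF g] using rp
    by (simp add: field_simps power2_eq_square)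
  finally show ?thesis .
qed

lemma key_bound:
  fixes h :: "nat \<Rightarrow> real"
  assumes g: "0 < g" "g \<le> 1" and r: "r \<ge> 1" and M: "\<And>n. \<bar>h n - c\<bar> \<le> M"
    and N0: "\<And>n. n \<ge> N0 \<Longrightarrow> \<bar>h n - c\<bar> \<le> e" and e: "e \<ge> 0" and c: "c \<ge> 0"
  shows "\<bar>(\<Sum>n\<le>r. w r g n * (sqrt n * h n)) / sqrt r - c * sqrt g\<bar> \<le>
           e + (M * sqrt N0 + c / sqrt g) / sqrt r"
proof -
  have g01: "g \<in> {0..1}" using g by auto
  define s where "s = sqrt (real r)"
  have s: "s > 0" using r by (simp add: s_def)
  have ss: "s * s = real r" using r by (simp add: s_def)
  have sg: "sqrt g > 0" using g by simp
  have wn: "w r g n \<ge> 0" for n using w_nonneg[OF g01] .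
  have M0: "M \<ge> 0" using M[of 0] by linarith
  define T1 where "T1 = (\<Sum>n\<le>r. w r g n * (sqrt n / s * (h n - c)))"
  define T2 where "T2 = (\<Sum>n\<le>r. w r g n * (sqrt n / s - sqrt g))"
  have split: "(\<Sum>n\<le>r. w r g n * (sqrt n * h n)) / s - c * sqrt g = T1 + c * T2"
  proof -
    have "T1 + c * T2 = (\<Sum>n\<le>r. w r g n * (sqrt n / s * (h n - c)) + c * (w r g n * (sqrt n / s - sqrt g)))"
      unfolding T1_def T2_def by (simp add: sum.distrib sum_distrib_left)
    also have "\<dots> = (\<Sum>n\<le>r. w r g n * (sqrt n * h n) / s - c * sqrt g * w r g n)"
    proof (intro sum.cong refl)
      fix n show "w r g n * (sqrt n / s * (h n - c)) + c * (w r g n * (sqrt n / s - sqrt g)) =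
        w r g n * (sqrt n * h n) / s - c * sqrt g * w r g n"
        using s by (simp add: field_simps)
    qed
    also have "\<dots> = (\<Sum>n\<le>r. w r g n * (sqrt n * h n)) / s - c * sqrt g * (\<Sum>n\<le>r. w r g n)"
      by (simp add: sum_subtractf sum_divide_distrib[symmetric] sum_distrib_left)
    finally show ?thesis using bin_one[OF g01] by simp
  qed
  have sq_le: "sqrt n / s \<le> 1" if "n \<le> r" for n
    using that s by (simp add: s_def)
  have T1: "\<bar>T1\<bar> \<le> e + M * sqrt N0 / s"
  proof -
    have "\<bar>T1\<bar> \<le> (\<Sum>n\<le>r. \<bar>w r g n * (sqrt n / s * (h n - c))\<bar>)"
      unfolding T1_def by (rule sum_abs)
    also have "\<dots> \<le> (\<Sum>n\<le>r. w r g n * (e + M * sqrt N0 / s))"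
    proof (intro sum_mono)
      fix n assume n: "n \<in> {..r}"
      have Y: "\<bar>sqrt n / s * (h n - c)\<bar> \<le> e + M * sqrt N0 / s"
      proof (cases "n \<ge> N0")
        case True
        have "\<bar>sqrt n / s * (h n - c)\<bar> = sqrt n / s * \<bar>h n - c\<bar>" using s by (simp add: abs_mult)
        also have "\<dots> \<le> 1 * e" using sq_le[of n] n N0[OF True] s
          by (intro mult_mono) auto
        also have "\<dots> \<le> e + M * sqrt N0 / s" using M0 s by simp
        finally show ?thesis .
      next
        case False
        have "\<bar>sqrt n / s * (h n - c)\<bar> = sqrt n / s * \<bar>h n - c\<bar>" using s by (simp add: abs_mult)
        also have "\<dots> \<le> sqrt N0 / s * M" using False s M[of n]
          by (intro mult_mono divide_right_mono) auto
        also have "\<dots> \<le> e + M * sqrt N0 / s" using e by (simp add: mult.commute)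
        finally show ?thesis .
      qed
      show "\<bar>w r g n * (sqrt n / s * (h n - c))\<bar> \<le> w r g n * (e + M * sqrt N0 / s)"
        using wn[of n] mult_left_mono[OF Y wn[of n]] by (simp only: abs_mult abs_of_nonneg)
    qed
    also have "\<dots> = e + M * sqrt N0 / s" using bin_one[OF g01] by (simp add: sum_distrib_right[symmetric])
    finally show ?thesis .
  qed
  have T2: "\<bar>T2\<bar> \<le> 1 / (sqrt g * s)"
  proof -
    have "\<bar>T2\<bar> \<le> (\<Sum>n\<le>r. \<bar>w r g n * (sqrt n / s - sqrt g)\<bar>)"
      unfolding T2_def by (rule sum_abs)
    also have "\<dots> \<le> (\<Sum>n\<le>r. w r g n * (((real n / r - g)^2 * s + 1 / s) / (2 * sqrt g)))"
    proof (intro sum_mono)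
      fix n assume n: "n \<in> {..r}"
      have "sqrt n / s = sqrt (real n / r)" by (simp add: s_def real_sqrt_divide)
      then have "\<bar>sqrt n / s - sqrt g\<bar> \<le> \<bar>real n / r - g\<bar> / sqrt g"
        using sqrt_diff_le[of "real n / r" g] g by simp
      also have "\<dots> \<le> (((real n / r - g)^2 * s + 1 / s) / 2) / sqrt g"
        using amgm_abs[OF s, of "real n / r - g"] sg by (intro divide_right_mono) auto
      finally have X: "\<bar>sqrt n / s - sqrt g\<bar> \<le> ((real n / r - g)^2 * s + 1 / s) / (2 * sqrt g)"
        by simp
      show "\<bar>w r g n * (sqrt n / s - sqrt g)\<bar> \<le> w r g n * (((real n / r - g)^2 * s + 1 / s) / (2 * sqrt g))"
        using wn[of n] mult_left_mono[OF X wn[of n]] by (simp only: abs_mult abs_of_nonneg)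
    qed
    also have "\<dots> = ((\<Sum>n\<le>r. w r g n * (real n / r - g)^2) * s + (\<Sum>n\<le>r. w r g n) / s) / (2 * sqrt g)"
    proof -
      have "(\<Sum>n\<le>r. w r g n * (((real n / r - g)^2 * s + 1 / s) / (2 * sqrt g))) =
            (\<Sum>n\<le>r. (s * (w r g n * (real n / r - g)^2) + w r g n / s) / (2 * sqrt g))"
        by (intro sum.cong refl) (simp add: field_simps)
      also have "\<dots> = (s * (\<Sum>n\<le>r. w r g n * (real n / r - g)^2) + (\<Sum>n\<le>r. w r g n) / s) / (2 * sqrt g)"
        by (simp add: sum_divide_distrib[symmetric] sum.distrib sum_distrib_left)
      finally show ?thesis by (simp add: mult.commute)
    qed
    also have "\<dots> = (g * (1 - g) / r * s + 1 / s) / (2 * sqrt g)"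
      unfolding bin_dev_sq[OF g01 r] bin_one[OF g01] ..
    also have "\<dots> = (g * (1 - g) + 1) / (2 * sqrt g * s)"
      using s sg ss r by (simp add: field_simps)
    also have "\<dots> \<le> 2 / (2 * sqrt g * s)"
    proof -
      have gg: "g * (1 - g) \<le> 1" using g by (intro mult_le_one) auto
      show ?thesis using gg s sg by (intro divide_right_mono) auto
    qed
    finally show ?thesis by simp
  qed
  have "\<bar>T1 + c * T2\<bar> \<le> \<bar>T1\<bar> + c * \<bar>T2\<bar>" using c by (simp add: abs_mult abs_triangle_ineq[THEN order_trans])
  also have "\<dots> \<le> (e + M * sqrt N0 / s) + c * (1 / (sqrt g * s))"
    using T1 T2 c by (intro add_mono mult_left_mono) auto
  also have "\<dots> = e + (M * sqrt N0 + c / sqrt g) / s" using s sg by (simp add: field_simps)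
  finally show ?thesis using split unfolding s_def by simp
qed

lemma cb_poch: "cb n = pochhammer (1/2) n / fact n"
proof -
  have "pochhammer (2 * (1/2::real)) (2*n) = of_nat (2^(2*n)) * pochhammer (1/2) n * pochhammer (1/2+1/2) n"
    by (rule pochhammer_double)
  then have f: "fact (2*n) = (4::real)^n * pochhammer (1/2) n * fact n"
    by (simp add: pochhammer_fact[symmetric] power_mult)
  have a: "real ((2*n) choose n) = (fact (2*n) :: real) / (fact n * fact n)"
    by (subst binomial_fact) auto
  show ?thesis unfolding cb_def a f by (simp add: field_simps)
qed

lemma cb_lim: "(\<lambda>n. sqrt (real n) * cb n) \<longlonglongrightarrow> 1 / sqrt pi"
proof -
  define GS where "GS = Gamma_series (1/2::real)"
  have GS: "GS \<longlonglongrightarrow> sqrt pi" unfolding GS_def using Gamma_series_LIMSEQ[of "1/2::real"]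
    by (simp add: Gamma_one_half_real)
  have q: "(\<lambda>n. 1 + (1/2) * (1 / real n)) \<longlonglongrightarrow> 1 + (1/2) * 0"
    by (intro tendsto_intros lim_1_over_n)
  have L: "(\<lambda>n. 1 / ((1 + (1/2) * (1 / real n)) * GS n)) \<longlonglongrightarrow> 1 / ((1 + (1/2) * 0) * sqrt pi)"
    by (intro tendsto_intros q GS) auto
  have ev: "\<forall>\<^sub>F n in sequentially. 1 / ((1 + (1/2) * (1 / real n)) * GS n) = sqrt (real n) * cb n"
    using eventually_ge_at_top[of 1]
  proof eventually_elim
    case (elim n)
    have n: "real n > 0" using elim by simp
    have e: "exp (1/2 * ln (real n)) = sqrt (real n)"
      using n powr_half_sqrt[of "real n"] by (simp add: powr_def)
    then have e2: "exp (ln (real n) / 2) = sqrt (real n)" by (simp add: mult.commute)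
    have pp: "pochhammer (1/2::real) n > 0" by (rule pochhammer_pos) simp
    have "GS n = fact n * sqrt (real n) / (pochhammer (1/2) n * (1/2 + real n))"
      unfolding GS_def Gamma_series_def by (simp add: pochhammer_Suc e e2)
    then have A0: "(1 + (1/2) * (1 / real n)) * GS n =
        ((1/2 + real n) / real n) * (fact n * sqrt (real n) / (pochhammer (1/2) n * (1/2 + real n)))"
      using n by (simp add: field_simps)
    also have "\<dots> = ((1/2 + real n) * (fact n * sqrt (real n))) / ((1/2 + real n) * (real n * pochhammer (1/2) n))"
      by (simp add: mult_ac)
    also have "\<dots> = fact n * sqrt (real n) / (real n * pochhammer (1/2) n)"
      by (rule nonzero_mult_divide_mult_cancel_left) (use n in simp)
    finally have A: "(1 + (1/2) * (1 / real n)) * GS n = fact n * sqrt (real n) / (real n * pochhammer (1/2) n)" .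
    have B: "real n / sqrt (real n) = sqrt (real n)" using n by (simp add: real_div_sqrt)
    have "1 / ((1 + (1/2) * (1 / real n)) * GS n) = (real n / sqrt (real n)) * (pochhammer (1/2) n / fact n)"
      unfolding A by simp
    then show ?case unfolding cb_poch B .
  qed
  show ?thesis using Lim_transform_eventually[OF L ev] by simp
qed

lemma mix_lim:
  assumes g: "0 < g" "g \<le> 1"
  shows "(\<lambda>r. (\<Sum>n\<le>r. w r g n * (real n * cb n)) / sqrt (real r)) \<longlonglongrightarrow> sqrt (g / pi)"
proof (rule LIMSEQ_I)
  fix eps :: real assume eps: "eps > 0"
  define h where "h n = sqrt (real n) * cb n" for n
  define c where "c = 1 / sqrt pi"
  have c0: "c \<ge> 0" by (simp add: c_def)
  have hl: "h \<longlonglongrightarrow> c" unfolding h_def c_def by (rule cb_lim)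
  have "Bseq (\<lambda>n. h n - c)"
  proof (rule convergent_imp_Bseq)
    have "(\<lambda>n. h n - c) \<longlonglongrightarrow> c - c" by (intro tendsto_diff hl tendsto_const)
    then show "convergent (\<lambda>n. h n - c)" by (auto simp: convergent_def)
  qed
  then obtain M where M: "\<And>n. \<bar>h n - c\<bar> \<le> M" by (metis BseqE real_norm_def)
  obtain N0 where N0: "\<And>n. n \<ge> N0 \<Longrightarrow> \<bar>h n - c\<bar> < eps/2"
    using LIMSEQ_D[OF hl, of "eps/2"] eps by auto
  define K where "K = M * sqrt (real N0) + c / sqrt g"
  define R where "R = max 1 (nat \<lceil>(2 * K / eps)^2\<rceil> + 1)"
  show "\<exists>no. \<forall>r\<ge>no. norm ((\<Sum>n\<le>r. w r g n * (real n * cb n)) / sqrt (real r) - sqrt (g / pi)) < eps"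
  proof (intro exI allI impI)
    fix r assume r: "r \<ge> R"
    have r1: "r \<ge> 1" using r by (simp add: R_def)
    have sr: "sqrt (real r) > 0" using r1 by simp
    have "real r > (2 * K / eps)^2"
    proof -
      have "(2 * K / eps)^2 \<le> real (nat \<lceil>(2 * K / eps)^2\<rceil>)" by linarith
      also have "\<dots> < real r" using r unfolding R_def by linarith
      finally show ?thesis .
    qed
    then have "sqrt (real r) > sqrt ((2 * K / eps)^2)" by (simp only: real_sqrt_less_iff)
    then have "sqrt (real r) > 2 * K / eps" by (metis abs_ge_self order_le_less_trans real_sqrt_abs)
    then have Ks: "K / sqrt (real r) < eps / 2" using sr eps by (simp add: field_simps)
    have sum_eq: "(\<Sum>n\<le>r. w r g n * (real n * cb n)) = (\<Sum>n\<le>r. w r g n * (sqrt n * h n))"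
      by (intro sum.cong refl) (simp add: h_def real_sqrt_mult_self mult.assoc[symmetric])
    have cg: "c * sqrt g = sqrt (g / pi)" by (simp add: c_def real_sqrt_divide)
    have "\<bar>(\<Sum>n\<le>r. w r g n * (sqrt n * h n)) / sqrt r - c * sqrt g\<bar> \<le> eps/2 + K / sqrt r"
      unfolding K_def by (rule key_bound[OF g r1 M _ _ c0]) (use N0 eps in \<open>auto intro: less_imp_le\<close>)
    also have "\<dots> < eps" using Ks by linarith
    finally show "norm ((\<Sum>n\<le>r. w r g n * (real n * cb n)) / sqrt (real r) - sqrt (g / pi)) < eps"
      unfolding sum_eq cg[symmetric] by simp
  qed
qed

lemma walk_abs_mix:
  assumes p: "p \<in> {0..1}"
  shows "measure_pmf.expectation (walk p r) (\<lambda>z. \<bar>real_of_int z\<bar>) =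
         (\<Sum>n\<le>r. w r (4*p*(1-p)) n * (real n * cb n))"
proof -
  have g: "4*p*(1-p) \<in> {0..1}" using gam01[OF p] by auto
  show ?thesis unfolding walk_mix[OF p]
    by (subst exp_bind_fin) (use g in \<open>auto simp: finite_set_pmf_binomial_pmf fin_walk exp_half_abs exp_bin\<close>)
qed

theorem lemma4:
  fixes d :: nat
  assumes "d \<ge> 1"
  shows "(\<forall>i<d. \<forall>r\<ge>1. \<forall>x\<in>stdSimplex d. \<bar>Rfun d i r x\<bar> \<le> 1)
       \<and> (\<forall>x\<in>simplexInt d. \<forall>i<d.
            ((\<lambda>r. Rfun d i r x + sqrt (x i * (1 - x i) / pi)) \<longlongrightarrow> 0) sequentially)"
proof (intro conjI allI impI ballI)
  fix i r x assume i: "i < d" and r: "(r::nat) \<ge> 1" and x: "x \<in> stdSimplex d"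
  have p: "x i \<in> {0..1}" using simplex_props(1)[OF x i] .
  define E where "E = measure_pmf.expectation (walk (x i) r) (\<lambda>z. \<bar>real_of_int z\<bar>)"
  have E0: "E \<ge> 0" unfolding E_def by (rule Bochner_Integration.integral_nonneg) simp
  have Eb: "E \<le> 3/4 * sqrt r" unfolding E_def by (rule walk_abs_bound[OF p r])
  have sr: "sqrt (real r) > 0" using r by simp
  have "\<bar>Rfun d i r x\<bar> = E / (2 * sqrt r)" unfolding Rfun_eq[OF i x r] E_def[symmetric]
    using E0 sr by simp
  also have "\<dots> \<le> (3/4 * sqrt r) / (2 * sqrt r)" using Eb sr by (intro divide_right_mono) auto
  also have "\<dots> \<le> 1" using sr by simp
  finally show "\<bar>Rfun d i r x\<bar> \<le> 1" .
next
  fix x i assume x: "x \<in> simplexInt d" and i: "i < d"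
  have xs: "x \<in> stdSimplex d" using x by (auto simp: simplexInt_def stdSimplex_def less_imp_le)
  have p0: "0 < x i" "x i < 1" using x i by (auto simp: simplexInt_def)
  have p: "x i \<in> {0..1}" using p0 by auto
  define g where "g = 4 * x i * (1 - x i)"
  have g: "0 < g" "g \<le> 1" using gam01[OF p] p0 by (auto simp: g_def)
  have gg: "sqrt (g / pi) = 2 * sqrt (x i * (1 - x i) / pi)"
  proof -
    have "sqrt (g / pi) = sqrt (2^2 * (x i * (1 - x i) / pi))" by (simp add: g_def)
    also have "\<dots> = sqrt (2^2) * sqrt (x i * (1 - x i) / pi)" by (rule real_sqrt_mult)
    finally show ?thesis by simp
  qed
  have L: "(\<lambda>r. - ((\<Sum>n\<le>r. w r g n * (real n * cb n)) / sqrt (real r)) / 2 + sqrt (g / pi) / 2)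
      \<longlonglongrightarrow> - (sqrt (g / pi)) / 2 + sqrt (g / pi) / 2"
    by (intro tendsto_intros mix_lim[OF g]) auto
  have ev: "\<forall>\<^sub>F r in sequentially.
     - ((\<Sum>n\<le>r. w r g n * (real n * cb n)) / sqrt (real r)) / 2 + sqrt (g / pi) / 2 =
     Rfun d i r x + sqrt (x i * (1 - x i) / pi)"
    using eventually_ge_at_top[of 1]
  proof eventually_elim
    case (elim r)
    show ?case unfolding Rfun_eq[OF i xs elim] walk_abs_mix[OF p] g_def[symmetric] gg
      by (simp add: field_simps)
  qed
  show "((\<lambda>r. Rfun d i r x + sqrt (x i * (1 - x i) / pi)) \<longlongrightarrow> 0) sequentially"
    using Lim_transform_eventually[OF L ev] by simp
qed

end
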